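(* Let $(u_n)_{n \geq 1}$ be a sequence of unitary matrices such that $u_n \in V(n)$ for all $n \geq 1$. Then $(u_n)_{n\ge1}$ is a virtual rotation in the sense of Neretin if and only if it is a virtual isometry.
   Context: $V(n)$ denotes the set of $n\times n$ unitary matrices which do not have $1$ as an eigenvalue. For $n\ge m\ge1$ and $u\in V(n)$ written in blocks $u=\begin{pmatrix}A&B\\C&D\end{pmatrix}$ of sizes $m\times m$, $m\times(n-m)$, $(n-m)\times m$, $(n-m)\times(n-m)$, $1-D$ is invertible and one sets $\tilde\pi_{n,m}(u) := A + B(1-D)^{-1}C\in V(m)$. A virtual rotation in the sense of Neretin is a sequence $(u_n)_{n\ge1}$ with $u_n\in V(n)$ and $u_m=\tilde\pi_{n,m}(u_n)$ for all $n\ge m\ge1$. Let $(e_k)$ be the canonical basis of $\ell^2$; identify $\mathbb{C}^n$ with the span of $e_1,\dots,e_n$ and $U(n)$ with the unitary operators fixing every $e_k$, $k>n$. For $n\ge m\ge1$ and $u\in U(n)$, $\pi_{n,m}(u)$ is the unique $v\in U(m)$ such that the range of $u-v$ is contained in $(u-\mathrm{Id})(\mathrm{span}\{e_k:k>m\})$ (existence and uniqueness are known). A virtual isometry is a sequence $(u_n)_{n\ge1}$ with $u_n\in U(n)$ and $\pi_{n+1,n}(u_{n+1})=u_n$ for all $n\ge1$. *)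

theory Defs
  imports "Jordan_Normal_Form.Char_Poly"
begin

(* Matrices are JNF matrices; an n x n matrix acts on C^n with 0-based
   indices, index i corresponding to the basis vector e_(i+1). *)

definition adj_mat :: "complex mat \<Rightarrow> complex mat" where
  "adj_mat u = mat (dim_col u) (dim_row u) (\<lambda>(i,j). cnj (u $$ (j,i)))"

definition U :: "nat \<Rightarrow> complex mat set" where
  "U n = {u. u \<in> carrier_mat n n \<and> u * adj_mat u = 1\<^sub>m n \<and> adj_mat u * u = 1\<^sub>m n}"

definition V :: "nat \<Rightarrow> complex mat set" where
  "V n = {u. u \<in> U n \<and> \<not> eigenvalue u 1}"

definition inv_mat :: "nat \<Rightarrow> complex mat \<Rightarrow> complex mat" where
  "inv_mat k M = (THE E. E \<in> carrier_mat k k \<and> E * M = 1\<^sub>m k \<and> M * E = 1\<^sub>m k)"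

definition pi_tilde :: "nat \<Rightarrow> nat \<Rightarrow> complex mat \<Rightarrow> complex mat" where
  "pi_tilde n m u = (case split_block u m m of (A, B, C, D) \<Rightarrow>
      A + B * inv_mat (n - m) (1\<^sub>m (n - m) - D) * C)"

definition virtual_rotation :: "(nat \<Rightarrow> complex mat) \<Rightarrow> bool" where
  "virtual_rotation u \<longleftrightarrow> (\<forall>n\<ge>1. u n \<in> V n) \<and>
     (\<forall>n m. 1 \<le> m \<longrightarrow> m \<le> n \<longrightarrow> u m = pi_tilde n m (u n))"

definition embed_mat :: "nat \<Rightarrow> nat \<Rightarrow> complex mat \<Rightarrow> complex mat" where
  "embed_mat n m v = four_block_mat v (0\<^sub>m m (n - m)) (0\<^sub>m (n - m) m) (1\<^sub>m (n - m))"

(* range of (u - v) contained in (u - Id)(span{e_k : k > m}); both sides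
   live in C^n since u - Id and u - v vanish on e_k, k > n *)
definition pi_cond :: "nat \<Rightarrow> nat \<Rightarrow> complex mat \<Rightarrow> complex mat \<Rightarrow> bool" where
  "pi_cond n m u v \<longleftrightarrow> (\<forall>x \<in> carrier_vec n. \<exists>y \<in> carrier_vec n.
      (\<forall>k<m. y $ k = 0) \<and> (u - embed_mat n m v) *\<^sub>v x = (u - 1\<^sub>m n) *\<^sub>v y)"

definition pi_proj :: "nat \<Rightarrow> nat \<Rightarrow> complex mat \<Rightarrow> complex mat" where
  "pi_proj n m u = (THE v. v \<in> U m \<and> pi_cond n m u v)"

definition virtual_isometry :: "(nat \<Rightarrow> complex mat) \<Rightarrow> bool" where
  "virtual_isometry u \<longleftrightarrow> (\<forall>n\<ge>1. u n \<in> U n) \<and>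
     (\<forall>n\<ge>1. pi_proj (Suc n) n (u (Suc n)) = u n)"

end

theory Submission imports Defs begin

lemma adj_carrier[simp]: "A \<in> carrier_mat n m \<Longrightarrow> adj_mat A \<in> carrier_mat m n"
  unfolding adj_mat_def by auto

lemma adj_index[simp]: "i < dim_col A \<Longrightarrow> j < dim_row A \<Longrightarrow> adj_mat A $$ (i,j) = cnj (A $$ (j,i))"
  unfolding adj_mat_def by auto

lemma adj_dims[simp]: "dim_row (adj_mat A) = dim_col A" "dim_col (adj_mat A) = dim_row A"
  unfolding adj_mat_def by auto

lemma adj_sprod:
  assumes A: "A \<in> carrier_mat n m" and x: "x \<in> carrier_vec m" and z: "z \<in> carrier_vec n"
  shows "(A *\<^sub>v x) \<bullet>c z = x \<bullet>c (adj_mat A *\<^sub>v z)"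
proof -
  have "(A *\<^sub>v x) \<bullet>c z = (\<Sum>i<n. (\<Sum>j<m. A $$ (i,j) * x $ j) * cnj (z $ i))"
    using A x z by (simp add: scalar_prod_def mult_mat_vec_def row_def lessThan_atLeast0)
  also have "\<dots> = (\<Sum>i<n. \<Sum>j<m. A $$ (i,j) * x $ j * cnj (z $ i))"
    by (simp add: sum_distrib_right)
  also have "\<dots> = (\<Sum>j<m. \<Sum>i<n. A $$ (i,j) * x $ j * cnj (z $ i))"
    by (rule sum.swap)
  also have "\<dots> = (\<Sum>j<m. x $ j * cnj (\<Sum>i<n. cnj (A $$ (i,j)) * z $ i))"
    by (simp add: sum_distrib_left mult_ac)
  also have "\<dots> = x \<bullet>c (adj_mat A *\<^sub>v z)"
    using A x z by (simp add: scalar_prod_def mult_mat_vec_def row_def lessThan_atLeast0)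
  finally show ?thesis .
qed

lemma unitary_iso:
  assumes u: "u \<in> carrier_mat n n" and uu: "adj_mat u * u = 1\<^sub>m n"
    and x: "x \<in> carrier_vec n" and y: "y \<in> carrier_vec n"
  shows "(u *\<^sub>v x) \<bullet>c (u *\<^sub>v y) = x \<bullet>c y"
proof -
  have "(u *\<^sub>v x) \<bullet>c (u *\<^sub>v y) = x \<bullet>c (adj_mat u *\<^sub>v (u *\<^sub>v y))"
    by (rule adj_sprod[OF u x], insert u y, auto)
  also have "adj_mat u *\<^sub>v (u *\<^sub>v y) = (adj_mat u * u) *\<^sub>v y"
    using u y by (subst assoc_mult_mat_vec[of _ n n u n y], auto)
  finally show ?thesis using uu y by simp
qed

lemma conjugate_append_vec: "conjugate (a @\<^sub>v b) = conjugate a @\<^sub>v conjugate (b :: complex vec)"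
  by (intro eq_vecI, auto simp: append_vec_def Let_def)

lemma csprod_append:
  assumes "a \<in> carrier_vec n1" "b \<in> carrier_vec n2" "c \<in> carrier_vec n1" "d \<in> carrier_vec n2"
  shows "(a @\<^sub>v b) \<bullet>c (c @\<^sub>v d) = a \<bullet>c c + b \<bullet>c (d :: complex vec)"
  unfolding conjugate_append_vec
  by (rule scalar_prod_append, insert assms, auto)

lemma inv_mat_props:
  assumes M: "M \<in> carrier_mat k k" and ker: "\<And>z. z \<in> carrier_vec k \<Longrightarrow> M *\<^sub>v z = 0\<^sub>v k \<Longrightarrow> z = 0\<^sub>v k"
  shows "inv_mat k M \<in> carrier_mat k k \<and> inv_mat k M * M = 1\<^sub>m k \<and> M * inv_mat k M = 1\<^sub>m k"
proof -
  have "det M \<noteq> 0" using det_0_iff_vec_prod_zero_field[OF M] ker by auto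
  from det_non_zero_imp_unit[OF M this, of "()"]
  obtain E where E: "E \<in> carrier_mat k k" "E * M = 1\<^sub>m k" "M * E = 1\<^sub>m k"
    unfolding Units_def ring_mat_simps by auto
  have uniq: "E' = E" if E': "E' \<in> carrier_mat k k" "E' * M = 1\<^sub>m k" for E'
  proof -
    have "E' = E' * (M * E)" using E E' by simp
    also have "\<dots> = (E' * M) * E" by (rule assoc_mult_mat[symmetric, OF E'(1) M E(1)])
    also have "\<dots> = E" using E E' by simp
    finally show ?thesis .
  qed
  have "inv_mat k M = E" unfolding inv_mat_def
  proof (rule the_equality)
    show "E \<in> carrier_mat k k \<and> E * M = 1\<^sub>m k \<and> M * E = 1\<^sub>m k" using E by auto
  next
    fix E' assume "E' \<in> carrier_mat k k \<and> E' * M = 1\<^sub>m k \<and> M * E' = 1\<^sub>m k"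
    thus "E' = E" using uniq by auto
  qed
  thus ?thesis using E by simp
qed

lemma block_setup:
  assumes u: "u \<in> carrier_mat n n" and mn: "m \<le> n" and sb: "split_block u m m = (A,B,C,D)"
  shows "A \<in> carrier_mat m m" "B \<in> carrier_mat m (n-m)" "C \<in> carrier_mat (n-m) m"
    "D \<in> carrier_mat (n-m) (n-m)" "u = four_block_mat A B C D"
  using split_block[OF sb, of "n-m" "n-m"] u mn by auto

lemma mat_vec_zero[simp]: "A \<in> carrier_mat nr nc \<Longrightarrow> A *\<^sub>v 0\<^sub>v nc = (0\<^sub>v nr :: 'a :: comm_ring vec)"
  by (intro eq_vecI, auto simp: scalar_prod_def)

lemma zero_append_vec: "0\<^sub>v m @\<^sub>v 0\<^sub>v k = (0\<^sub>v (m+k) :: 'a :: zero vec)"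
  by (intro eq_vecI, auto)

lemma ker_1D:
  assumes uV: "u \<in> V n" and mn: "m \<le> n" and sb: "split_block u m m = (A,B,C,D)"
    and z: "z \<in> carrier_vec (n-m)" and kz: "(1\<^sub>m (n-m) - D) *\<^sub>v z = 0\<^sub>v (n-m)"
  shows "z = 0\<^sub>v (n-m)"
proof (rule ccontr)
  assume nz: "z \<noteq> 0\<^sub>v (n-m)"
  let ?k = "n - m"
  have u: "u \<in> carrier_mat n n" and uu: "adj_mat u * u = 1\<^sub>m n" and ne: "\<not> eigenvalue u 1"
    using uV unfolding V_def U_def by auto
  note bs = block_setup[OF u mn sb]
  have "1\<^sub>m ?k *\<^sub>v z - D *\<^sub>v z = 0\<^sub>v ?k" using kz
    minus_mult_distrib_mat_vec[OF one_carrier_mat bs(4) z] by simp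
  hence Dz: "D *\<^sub>v z = z"
  proof -
    assume h: "1\<^sub>m ?k *\<^sub>v z - D *\<^sub>v z = 0\<^sub>v ?k"
    show "D *\<^sub>v z = z"
    proof (rule eq_vecI)
      fix i assume i: "i < dim_vec z"
      have "(1\<^sub>m ?k *\<^sub>v z - D *\<^sub>v z) $ i = 0" using h i z by simp
      thus "(D *\<^sub>v z) $ i = z $ i" using i z bs by simp
    qed (use bs z in simp)
  qed
  define w where "w = 0\<^sub>v m @\<^sub>v z"
  have w: "w \<in> carrier_vec n" using z mn unfolding w_def
    by (metis append_carrier_vec le_add_diff_inverse zero_carrier_vec)
  have uw: "u *\<^sub>v w = (B *\<^sub>v z) @\<^sub>v z"
    unfolding w_def bs(5)
    by (subst four_block_mat_mult_vec[OF bs(1-4)], insert bs z Dz, auto)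
  have "((B *\<^sub>v z) @\<^sub>v z) \<bullet>c ((B *\<^sub>v z) @\<^sub>v z) = (0\<^sub>v m @\<^sub>v z) \<bullet>c (0\<^sub>v m @\<^sub>v z)"
    using unitary_iso[OF u uu w w] unfolding uw by (simp add: w_def)
  hence "(B *\<^sub>v z) \<bullet>c (B *\<^sub>v z) + z \<bullet>c z = 0\<^sub>v m \<bullet>c 0\<^sub>v m + z \<bullet>c z"
    using csprod_append[of "B *\<^sub>v z" m z ?k "B *\<^sub>v z" z]
      csprod_append[of "0\<^sub>v m" m z ?k "0\<^sub>v m" z] bs z by auto
  hence "(B *\<^sub>v z) \<bullet>c (B *\<^sub>v z) = 0" by simp
  hence Bz: "B *\<^sub>v z = 0\<^sub>v m" using bs z by (subst (asm) conjugate_square_eq_0_vec, auto)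
  have "u *\<^sub>v w = w" using uw Bz by (simp add: w_def)
  hence "u *\<^sub>v w = 1 \<cdot>\<^sub>v w" by simp
  moreover have "w \<noteq> 0\<^sub>v n"
  proof
    assume "w = 0\<^sub>v n"
    moreover have e: "0\<^sub>v m @\<^sub>v 0\<^sub>v ?k = (0\<^sub>v n :: complex vec)" using zero_append_vec[of m ?k] mn by simp
    ultimately have "0\<^sub>v m @\<^sub>v z = 0\<^sub>v m @\<^sub>v 0\<^sub>v ?k" unfolding w_def by metis
    thus False using nz append_vec_eq[of "0\<^sub>v m" m "0\<^sub>v m" z "0\<^sub>v ?k"] by simp
  qed
  ultimately have "eigenvalue u 1" unfolding eigenvalue_def eigenvector_def using u w by auto
  thus False using ne by simp
qed

declare minus_carrier_mat[simp]

lemma minus_zero_mat'[simp]: "B \<in> carrier_mat nr nc \<Longrightarrow> B - 0\<^sub>m nr nc = (B :: 'a :: ab_group_add mat)"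
  by (intro eq_matI, auto)

lemma vec_lin1: "a \<in> carrier_vec n \<Longrightarrow> b \<in> carrier_vec n \<Longrightarrow> c \<in> carrier_vec n \<Longrightarrow>
  a - (a + b) + c = 0\<^sub>v n + (c - (b :: complex vec))"
  by (intro eq_vecI, auto)

lemma vec_lin2: "a \<in> carrier_vec n \<Longrightarrow> b \<in> carrier_vec n \<Longrightarrow>
  a + b = 0\<^sub>v n + (b - - (a :: complex vec))"
  by (intro eq_vecI, auto)

lemma mat_eq_by_vec:
  fixes M N :: "complex mat"
  assumes M: "M \<in> carrier_mat r c" and N: "N \<in> carrier_mat r c"
    and h: "\<And>x. x \<in> carrier_vec c \<Longrightarrow> M *\<^sub>v x = N *\<^sub>v x"
  shows "M = N"
proof (rule eq_matI)
  fix i j assume i: "i < dim_row N" and j: "j < dim_col N"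
  have "M $$ (i,j) = (M *\<^sub>v unit_vec c j) $ i" using M N i j by (simp add: row_def)
  also have "\<dots> = (N *\<^sub>v unit_vec c j) $ i" using h[of "unit_vec c j"] by simp
  also have "\<dots> = N $$ (i,j)" using M N i j by (simp add: row_def)
  finally show "M $$ (i,j) = N $$ (i,j)" .
qed (use M N in auto)

lemma mat_vec_uminus: "A \<in> carrier_mat nr nc \<Longrightarrow> v \<in> carrier_vec nc \<Longrightarrow> A *\<^sub>v (- v) = - (A *\<^sub>v (v :: complex vec))"
  by (intro eq_vecI, auto)

lemma conj_unit_vec: "conjugate (unit_vec n i :: complex vec) = unit_vec n i"
  by (intro eq_vecI, auto simp: unit_vec_def)

lemma col_by_unit: "M \<in> carrier_mat r c \<Longrightarrow> j < c \<Longrightarrow> M *\<^sub>v unit_vec c j = col (M :: complex mat) j"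
  by (intro eq_vecI, auto simp: row_def)

lemma iso_imp_unitary:
  fixes M :: "complex mat"
  assumes M: "M \<in> carrier_mat m m"
    and iso: "\<And>x y. x \<in> carrier_vec m \<Longrightarrow> y \<in> carrier_vec m \<Longrightarrow> (M *\<^sub>v x) \<bullet>c (M *\<^sub>v y) = x \<bullet>c y"
  shows "M \<in> U m"
proof -
  have h: "adj_mat M * M = 1\<^sub>m m"
  proof (rule eq_matI)
    fix i j assume i: "i < dim_row (1\<^sub>m m :: complex mat)" and j: "j < dim_col (1\<^sub>m m :: complex mat)"
    hence i: "i < m" and j: "j < m" by auto
    have "(adj_mat M * M) $$ (i,j) = (\<Sum>l<m. cnj (M $$ (l,i)) * M $$ (l,j))"
      using M i j by (simp add: scalar_prod_def row_def col_def lessThan_atLeast0)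
    also have "\<dots> = col M j \<bullet>c col M i"
      using M i j by (simp add: scalar_prod_def col_def lessThan_atLeast0 mult_ac)
    also have "\<dots> = (M *\<^sub>v unit_vec m j) \<bullet>c (M *\<^sub>v unit_vec m i)"
      using col_by_unit[OF M i] col_by_unit[OF M j] by simp
    also have "\<dots> = unit_vec m j \<bullet>c unit_vec m i" by (rule iso, auto)
    also have "\<dots> = 1\<^sub>m m $$ (i,j)" unfolding conj_unit_vec using i j by simp
    finally show "(adj_mat M * M) $$ (i,j) = 1\<^sub>m m $$ (i,j)" .
  qed (use M in auto)
  moreover have "M * adj_mat M = 1\<^sub>m m"
    by (rule mat_mult_left_right_inverse[OF adj_carrier[OF M] M h])
  ultimately show ?thesis unfolding U_def using M by auto
qed

lemma four_block_minus:
  assumes "A \<in> carrier_mat nr1 nc1" "B \<in> carrier_mat nr1 nc2" "C \<in> carrier_mat nr2 nc1" "D \<in> carrier_mat nr2 nc2"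
    "A' \<in> carrier_mat nr1 nc1" "B' \<in> carrier_mat nr1 nc2" "C' \<in> carrier_mat nr2 nc1" "D' \<in> carrier_mat nr2 nc2"
  shows "four_block_mat A B C D - four_block_mat A' B' C' D' = four_block_mat (A - A') (B - B') (C - C') (D - D')"
  using assms by (intro eq_matI, auto)

lemma one_four_block: "1\<^sub>m (m + k) = four_block_mat (1\<^sub>m m) (0\<^sub>m m k) (0\<^sub>m k m) (1\<^sub>m k)"
  by (intro eq_matI, auto)

locale blk =
  fixes n m :: nat and u A B C D :: "complex mat"
  assumes uV: "u \<in> V n" and mn: "m \<le> n" and sb: "split_block u m m = (A,B,C,D)"
begin

abbreviation "k \<equiv> n - m"

lemma u: "u \<in> carrier_mat n n" and uu: "adj_mat u * u = 1\<^sub>m n"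
  using uV unfolding V_def U_def by auto

lemmas bs = block_setup[OF u mn sb]
lemma A[simp]: "A \<in> carrier_mat m m" using bs by simp
lemma B[simp]: "B \<in> carrier_mat m k" using bs by simp
lemma C[simp]: "C \<in> carrier_mat k m" using bs by simp
lemma D[simp]: "D \<in> carrier_mat k k" using bs by simp
lemma u4: "u = four_block_mat A B C D" using bs by simp
lemma nmk: "n = m + k" using mn by simp

definition "F = 1\<^sub>m k - D"
definition "E = inv_mat k F"
definition "P = A + B * E * C"

lemma F[simp]: "F \<in> carrier_mat k k" unfolding F_def by simp

lemma Eprops: "E \<in> carrier_mat k k \<and> E * F = 1\<^sub>m k \<and> F * E = 1\<^sub>m k"
  unfolding E_def
  by (rule inv_mat_props[OF F], rule ker_1D[OF uV mn sb], auto simp: F_def)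

lemma E[simp]: "E \<in> carrier_mat k k" and EF: "E * F = 1\<^sub>m k" and FE: "F * E = 1\<^sub>m k"
  using Eprops by auto

lemma BEC[simp]: "B * E * C \<in> carrier_mat m m"
  by (rule mult_carrier_mat[OF mult_carrier_mat[OF B E] C])

lemma P[simp]: "P \<in> carrier_mat m m" unfolding P_def by simp

lemma pi_tilde_P: "pi_tilde n m u = P"
  unfolding pi_tilde_def sb P_def E_def F_def by simp

lemma D1: "(D - 1\<^sub>m k) * E = - 1\<^sub>m k"
proof -
  have "D - 1\<^sub>m k = - F" unfolding F_def by (intro eq_matI) (auto simp: carrier_matD[OF D])
  moreover have "- F * E = - (F * E)" by (rule uminus_mult_left_mat, simp add: carrier_matD[OF F] carrier_matD[OF E])
  ultimately show ?thesis using FE by simp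
qed

lemma Pvec: assumes x1: "x1 \<in> carrier_vec m" shows "P *\<^sub>v x1 = A *\<^sub>v x1 + B *\<^sub>v (E *\<^sub>v (C *\<^sub>v x1))"
  unfolding P_def
  by (subst add_mult_distrib_mat_vec[of _ m m], insert x1, auto simp: assoc_mult_mat_vec[OF mult_carrier_mat[OF B E] C x1]
     assoc_mult_mat_vec[OF B E mult_mat_vec_carrier[OF C x1]])

lemma um: "u - 1\<^sub>m n = four_block_mat (A - 1\<^sub>m m) B C (D - 1\<^sub>m k)"
proof -
  have "1\<^sub>m n = four_block_mat (1\<^sub>m m) (0\<^sub>m m k) (0\<^sub>m k m) (1\<^sub>m k)"
    by (metis nmk one_four_block)
  note e = this
  show ?thesis unfolding u4 e
    using four_block_minus[OF A B C D one_carrier_mat zero_carrier_mat zero_carrier_mat one_carrier_mat]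
    by simp
qed

lemma uE: "v \<in> carrier_mat m m \<Longrightarrow> u - embed_mat n m v = four_block_mat (A - v) B C (D - 1\<^sub>m k)"
  unfolding u4 embed_mat_def
  using four_block_minus[OF A B C D _ zero_carrier_mat zero_carrier_mat one_carrier_mat]
  by simp

lemmas dims[simp] = carrier_matD[OF A] carrier_matD[OF B] carrier_matD[OF C] carrier_matD[OF D]
  carrier_matD[OF E] carrier_matD[OF P]

lemma mv_carriers[simp]:
  "x \<in> carrier_vec m \<Longrightarrow> A *\<^sub>v x \<in> carrier_vec m"
  "x \<in> carrier_vec k \<Longrightarrow> B *\<^sub>v x \<in> carrier_vec m"
  "x \<in> carrier_vec m \<Longrightarrow> C *\<^sub>v x \<in> carrier_vec k"
  "x \<in> carrier_vec k \<Longrightarrow> D *\<^sub>v x \<in> carrier_vec k"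
  "x \<in> carrier_vec k \<Longrightarrow> E *\<^sub>v x \<in> carrier_vec k"
  "x \<in> carrier_vec m \<Longrightarrow> P *\<^sub>v x \<in> carrier_vec m"
  "x \<in> carrier_vec k \<Longrightarrow> (D - 1\<^sub>m k) *\<^sub>v x \<in> carrier_vec k"
  "x \<in> carrier_vec m \<Longrightarrow> (A - P) *\<^sub>v x \<in> carrier_vec m"
  "x \<in> carrier_vec m \<Longrightarrow> (A - 1\<^sub>m m) *\<^sub>v x \<in> carrier_vec m"
  by (rule mult_mat_vec_carrier[OF A], assumption, rule mult_mat_vec_carrier[OF B], assumption,
      rule mult_mat_vec_carrier[OF C], assumption, rule mult_mat_vec_carrier[OF D], assumption,
      rule mult_mat_vec_carrier[OF E], assumption, rule mult_mat_vec_carrier[OF P], assumption,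
      rule mult_mat_vec_carrier[OF minus_carrier_mat[OF one_carrier_mat]], assumption,
      rule mult_mat_vec_carrier[OF minus_carrier_mat[OF P]], assumption,
      rule mult_mat_vec_carrier[OF minus_carrier_mat[OF one_carrier_mat]], assumption)

lemma D1vec: assumes c: "c \<in> carrier_vec k" shows "(D - 1\<^sub>m k) *\<^sub>v (E *\<^sub>v c) = - c"
proof -
  have "(D - 1\<^sub>m k) *\<^sub>v (E *\<^sub>v c) = ((D - 1\<^sub>m k) * E) *\<^sub>v c"
    by (rule assoc_mult_mat_vec[symmetric, of _ k k _ k], insert c, auto)
  also have "\<dots> = - c" unfolding D1 using c by (intro eq_vecI, auto)
  finally show ?thesis .
qed

lemma xsplit: assumes x: "x \<in> carrier_vec n" shows "x = vec_first x m @\<^sub>v vec_last x k"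
  using x nmk by (metis vec_first_last_append)

lemma pi_cond_P: "pi_cond n m u P"
  unfolding pi_cond_def
proof (intro ballI)
  fix x :: "complex vec" assume x: "x \<in> carrier_vec n"
  define x1 where "x1 = vec_first x m"
  define x2 where "x2 = vec_last x k"
  have x1: "x1 \<in> carrier_vec m" and x2: "x2 \<in> carrier_vec k" unfolding x1_def x2_def by auto
  have xs: "x = x1 @\<^sub>v x2" unfolding x1_def x2_def by (rule xsplit[OF x])
  define c where "c = C *\<^sub>v x1"
  have c: "c \<in> carrier_vec k" unfolding c_def using x1 by simp
  define e where "e = E *\<^sub>v c"
  have e: "e \<in> carrier_vec k" unfolding e_def using c by simp
  define y2 where "y2 = x2 - e"
  have y2: "y2 \<in> carrier_vec k" unfolding y2_def using x2 e by simp
  define y where "y = 0\<^sub>v m @\<^sub>v y2"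
  have y: "y \<in> carrier_vec n" unfolding y_def using y2 nmk by (metis append_carrier_vec zero_carrier_vec)
  have y0: "\<forall>i<m. y $ i = 0" unfolding y_def using y2 by simp
  have L: "(u - embed_mat n m P) *\<^sub>v x = ((A - P) *\<^sub>v x1 + B *\<^sub>v x2) @\<^sub>v (C *\<^sub>v x1 + (D - 1\<^sub>m k) *\<^sub>v x2)"
    unfolding uE[OF P] xs
    by (rule four_block_mat_mult_vec[OF _ B C _ x1 x2], auto)
  have R: "(u - 1\<^sub>m n) *\<^sub>v y = ((A - 1\<^sub>m m) *\<^sub>v 0\<^sub>v m + B *\<^sub>v y2) @\<^sub>v (C *\<^sub>v 0\<^sub>v m + (D - 1\<^sub>m k) *\<^sub>v y2)"
    unfolding um y_def
    by (rule four_block_mat_mult_vec[OF _ B C _ _ y2], auto)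
  have e1: "(A - P) *\<^sub>v x1 = A *\<^sub>v x1 - P *\<^sub>v x1" by (rule minus_mult_distrib_mat_vec[OF A P x1])
  have e2: "B *\<^sub>v y2 = B *\<^sub>v x2 - B *\<^sub>v e" unfolding y2_def by (rule mult_minus_distrib_mat_vec[OF B x2 e])
  have e3: "(D - 1\<^sub>m k) *\<^sub>v y2 = (D - 1\<^sub>m k) *\<^sub>v x2 - (D - 1\<^sub>m k) *\<^sub>v e" unfolding y2_def
    by (rule mult_minus_distrib_mat_vec[OF minus_carrier_mat[OF one_carrier_mat] x2 e])
  have e4: "(D - 1\<^sub>m k) *\<^sub>v e = - c" unfolding e_def by (rule D1vec[OF c])
  have e5: "P *\<^sub>v x1 = A *\<^sub>v x1 + B *\<^sub>v e" unfolding e_def c_def by (rule Pvec[OF x1])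
  have top: "(A - P) *\<^sub>v x1 + B *\<^sub>v x2 = (A - 1\<^sub>m m) *\<^sub>v 0\<^sub>v m + B *\<^sub>v y2"
    unfolding e1 e2 e5 mat_vec_zero[OF minus_carrier_mat[OF one_carrier_mat[of m]]]
    by (rule vec_lin1, insert x1 x2 e, auto)
  have bot: "C *\<^sub>v x1 + (D - 1\<^sub>m k) *\<^sub>v x2 = C *\<^sub>v 0\<^sub>v m + (D - 1\<^sub>m k) *\<^sub>v y2"
    unfolding e3 e4 c_def[symmetric] mat_vec_zero[OF C]
    by (rule vec_lin2, insert c x2, auto)
  show "\<exists>y\<in>carrier_vec n. (\<forall>k<m. y $ k = 0) \<and> (u - embed_mat n m P) *\<^sub>v x = (u - 1\<^sub>m n) *\<^sub>v y"
    using y y0 L R top bot by auto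
qed

lemma E_D1: "E * (D - 1\<^sub>m k) = - 1\<^sub>m k"
proof -
  have "D - 1\<^sub>m k = - F" unfolding F_def by (intro eq_matI) (auto simp: carrier_matD[OF D])
  moreover have "E * - F = - (E * F)" by (rule uminus_mult_right_mat, simp add: carrier_matD[OF F] carrier_matD[OF E])
  ultimately show ?thesis using EF by simp
qed

lemma pi_cond_uniq:
  assumes v: "v \<in> carrier_mat m m" and pc: "pi_cond n m u v"
  shows "v = P"
proof (rule mat_eq_by_vec[OF v P])
  fix x1 :: "complex vec" assume x1: "x1 \<in> carrier_vec m"
  define x where "x = x1 @\<^sub>v 0\<^sub>v k"
  have x: "x \<in> carrier_vec n" unfolding x_def using x1 nmk by (metis append_carrier_vec zero_carrier_vec)
  from pc[unfolded pi_cond_def, rule_format, OF x] obtain y where y: "y \<in> carrier_vec n"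
    and y0: "\<forall>i<m. y $ i = 0" and eq: "(u - embed_mat n m v) *\<^sub>v x = (u - 1\<^sub>m n) *\<^sub>v y" by auto
  define y2 where "y2 = vec_last y k"
  have y2: "y2 \<in> carrier_vec k" unfolding y2_def by simp
  have "vec_first y m = 0\<^sub>v m" using y0 unfolding vec_first_def by (intro eq_vecI, auto)
  hence ys: "y = 0\<^sub>v m @\<^sub>v y2" using xsplit[OF y] unfolding y2_def by simp
  have L: "(u - embed_mat n m v) *\<^sub>v x = ((A - v) *\<^sub>v x1 + B *\<^sub>v 0\<^sub>v k) @\<^sub>v (C *\<^sub>v x1 + (D - 1\<^sub>m k) *\<^sub>v 0\<^sub>v k)"
    unfolding uE[OF v] x_def
    by (rule four_block_mat_mult_vec[OF _ B C _ x1], insert v, auto)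
  have R: "(u - 1\<^sub>m n) *\<^sub>v y = ((A - 1\<^sub>m m) *\<^sub>v 0\<^sub>v m + B *\<^sub>v y2) @\<^sub>v (C *\<^sub>v 0\<^sub>v m + (D - 1\<^sub>m k) *\<^sub>v y2)"
    unfolding um ys
    by (rule four_block_mat_mult_vec[OF _ B C _ _ y2], auto)
  have Av: "(A - v) *\<^sub>v x1 \<in> carrier_vec m" using v x1 by (metis mult_mat_vec_carrier minus_carrier_mat)
  have "(A - v) *\<^sub>v x1 + B *\<^sub>v 0\<^sub>v k = (A - 1\<^sub>m m) *\<^sub>v 0\<^sub>v m + B *\<^sub>v y2"
    and "C *\<^sub>v x1 + (D - 1\<^sub>m k) *\<^sub>v 0\<^sub>v k = C *\<^sub>v 0\<^sub>v m + (D - 1\<^sub>m k) *\<^sub>v y2"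
    using eq unfolding L R
    by (subst (asm) append_vec_eq[of _ m], insert Av y2 x1, auto)+
  hence h1: "(A - v) *\<^sub>v x1 = B *\<^sub>v y2" and h2: "C *\<^sub>v x1 = (D - 1\<^sub>m k) *\<^sub>v y2"
    using Av y2 x1 mat_vec_zero[OF B] mat_vec_zero[OF C] mat_vec_zero[of "A - 1\<^sub>m m" m m]
      mat_vec_zero[of "D - 1\<^sub>m k" k k] by auto
  have "E *\<^sub>v (C *\<^sub>v x1) = (E * (D - 1\<^sub>m k)) *\<^sub>v y2" unfolding h2
    by (rule assoc_mult_mat_vec[symmetric, of _ k k _ k], insert y2, auto)
  also have "\<dots> = - y2" unfolding E_D1 using y2 by (intro eq_vecI, auto)
  finally have ey: "E *\<^sub>v (C *\<^sub>v x1) = - y2" .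
  have h1': "A *\<^sub>v x1 - v *\<^sub>v x1 = B *\<^sub>v y2" using h1 minus_mult_distrib_mat_vec[OF A v x1] by simp
  have "P *\<^sub>v x1 = A *\<^sub>v x1 + B *\<^sub>v (- y2)" unfolding Pvec[OF x1] ey ..
  also have "\<dots> = A *\<^sub>v x1 - B *\<^sub>v y2" unfolding mat_vec_uminus[OF B y2]
    using x1 y2 by (intro eq_vecI, auto)
  also have "\<dots> = v *\<^sub>v x1" unfolding h1'[symmetric] using x1 v by (intro eq_vecI, auto)
  finally show "v *\<^sub>v x1 = P *\<^sub>v x1" ..
qed

lemma P_iso:
  assumes x: "x \<in> carrier_vec m" and y: "y \<in> carrier_vec m"
  shows "(P *\<^sub>v x) \<bullet>c (P *\<^sub>v y) = x \<bullet>c y"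
proof -
  have uW: "u *\<^sub>v (z @\<^sub>v E *\<^sub>v (C *\<^sub>v z)) = (P *\<^sub>v z) @\<^sub>v E *\<^sub>v (C *\<^sub>v z)"
    and W: "z @\<^sub>v E *\<^sub>v (C *\<^sub>v z) \<in> carrier_vec n" if z: "z \<in> carrier_vec m" for z
  proof -
    define c where "c = C *\<^sub>v z"
    have c: "c \<in> carrier_vec k" unfolding c_def using z by simp
    define e where "e = E *\<^sub>v c"
    have e: "e \<in> carrier_vec k" unfolding e_def using c by simp
    have "F *\<^sub>v e = (F * E) *\<^sub>v c" unfolding e_def
      by (rule assoc_mult_mat_vec[symmetric, of _ k k _ k], insert c, auto)
    also have "\<dots> = c" unfolding FE using c by simp
    finally have "F *\<^sub>v e = c" .
    moreover have "F *\<^sub>v e = e - D *\<^sub>v e" unfolding F_def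
      using minus_mult_distrib_mat_vec[OF one_carrier_mat D e] e by simp
    ultimately have "e - D *\<^sub>v e = c" by simp
    hence ce: "c + D *\<^sub>v e = e" using e c by (intro eq_vecI, auto dest: arg_cong[of _ _ "\<lambda>v. v $ _"])
    have "u *\<^sub>v (z @\<^sub>v e) = (A *\<^sub>v z + B *\<^sub>v e) @\<^sub>v (C *\<^sub>v z + D *\<^sub>v e)"
      unfolding u4 by (rule four_block_mat_mult_vec[OF A B C D z e])
    also have "\<dots> = (P *\<^sub>v z) @\<^sub>v e" unfolding Pvec[OF z] c_def[symmetric] e_def[symmetric] ce ..
    finally show "u *\<^sub>v (z @\<^sub>v E *\<^sub>v (C *\<^sub>v z)) = (P *\<^sub>v z) @\<^sub>v E *\<^sub>v (C *\<^sub>v z)"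
      unfolding e_def c_def .
    show "z @\<^sub>v E *\<^sub>v (C *\<^sub>v z) \<in> carrier_vec n" using z nmk
      by (metis append_carrier_vec mv_carriers(3,5))
  qed
  have "(u *\<^sub>v (x @\<^sub>v E *\<^sub>v (C *\<^sub>v x))) \<bullet>c (u *\<^sub>v (y @\<^sub>v E *\<^sub>v (C *\<^sub>v y)))
      = (x @\<^sub>v E *\<^sub>v (C *\<^sub>v x)) \<bullet>c (y @\<^sub>v E *\<^sub>v (C *\<^sub>v y))"
    by (rule unitary_iso[OF u uu W[OF x] W[OF y]])
  hence "(P *\<^sub>v x) \<bullet>c (P *\<^sub>v y) + (E *\<^sub>v (C *\<^sub>v x)) \<bullet>c (E *\<^sub>v (C *\<^sub>v y))
     = x \<bullet>c y + (E *\<^sub>v (C *\<^sub>v x)) \<bullet>c (E *\<^sub>v (C *\<^sub>v y))"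
    unfolding uW[OF x] uW[OF y]
    using csprod_append[of "P *\<^sub>v x" m "E *\<^sub>v (C *\<^sub>v x)" k "P *\<^sub>v y" "E *\<^sub>v (C *\<^sub>v y)"]
      csprod_append[of x m "E *\<^sub>v (C *\<^sub>v x)" k y "E *\<^sub>v (C *\<^sub>v y)"] x y by simp
  thus ?thesis by simp
qed

lemma P_unitary: "P \<in> U m"
  by (rule iso_imp_unitary[OF P P_iso])

lemma pi_proj_eq: "pi_proj n m u = pi_tilde n m u"
  unfolding pi_proj_def pi_tilde_P
proof (rule the_equality)
  show "P \<in> U m \<and> pi_cond n m u P" using P_unitary pi_cond_P by simp
next
  fix v assume "v \<in> U m \<and> pi_cond n m u v"
  thus "v = P" using pi_cond_uniq unfolding U_def by auto
qed

end

lemma pi_cond_iff: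
  assumes uV: "u \<in> V n" and mn: "m \<le> n" and v: "v \<in> carrier_mat m m"
  shows "pi_cond n m u v \<longleftrightarrow> v = pi_tilde n m u"
proof -
  obtain A B C D where sb: "split_block u m m = (A,B,C,D)" by (cases "split_block u m m") auto
  interpret blk n m u A B C D by (unfold_locales, fact uV, fact mn, fact sb)
  show ?thesis using pi_cond_uniq[OF v] pi_cond_P pi_tilde_P by auto
qed

lemma pi_proj_tilde:
  assumes uV: "u \<in> V n" and mn: "m \<le> n"
  shows "pi_proj n m u = pi_tilde n m u"
proof -
  obtain A B C D where sb: "split_block u m m = (A,B,C,D)" by (cases "split_block u m m") auto
  interpret blk n m u A B C D by (unfold_locales, fact uV, fact mn, fact sb)
  show ?thesis by (rule pi_proj_eq)
qed

lemma embed_same: "v \<in> carrier_mat m m \<Longrightarrow> embed_mat m m v = v"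
  unfolding embed_mat_def by (intro eq_matI, auto)

lemma embed_comp:
  assumes w: "w \<in> carrier_mat m m" and mk: "m \<le> k" and kn: "k \<le> n"
  shows "embed_mat n k (embed_mat k m w) = embed_mat n m w"
  unfolding embed_mat_def using w mk kn by (intro eq_matI, auto)

lemma embed_carrier: "v \<in> carrier_mat m m \<Longrightarrow> m \<le> n \<Longrightarrow> embed_mat n m v \<in> carrier_mat n n"
  unfolding embed_mat_def by (metis four_block_carrier_mat le_add_diff_inverse one_carrier_mat)

lemma zero_mat_vec': "v \<in> carrier_vec nc \<Longrightarrow> 0\<^sub>m nr nc *\<^sub>v v = (0\<^sub>v nr :: complex vec)"
  by (intro eq_vecI, auto simp: scalar_prod_def)

lemma embed_one: "k \<le> n \<Longrightarrow> embed_mat n k (1\<^sub>m k) = (1\<^sub>m n :: complex mat)"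
  unfolding embed_mat_def by (intro eq_matI, auto)

lemma embed_diff_vec:
  fixes v M :: "complex mat"
  assumes v: "v \<in> carrier_mat k k" and M: "M \<in> carrier_mat k k" and kn: "k \<le> n"
    and x1: "x1 \<in> carrier_vec k" and x2: "x2 \<in> carrier_vec (n-k)"
  shows "(embed_mat n k v - embed_mat n k M) *\<^sub>v (x1 @\<^sub>v x2) = ((v - M) *\<^sub>v x1) @\<^sub>v 0\<^sub>v (n-k)"
proof -
  have "embed_mat n k v - embed_mat n k M = four_block_mat (v - M) (0\<^sub>m k (n-k) - 0\<^sub>m k (n-k))
      (0\<^sub>m (n-k) k - 0\<^sub>m (n-k) k) (1\<^sub>m (n-k) - 1\<^sub>m (n-k))"
    unfolding embed_mat_def
    by (rule four_block_minus[OF v zero_carrier_mat zero_carrier_mat one_carrier_mat M zero_carrier_mat zero_carrier_mat one_carrier_mat])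
  also have "\<dots> = four_block_mat (v - M) (0\<^sub>m k (n-k)) (0\<^sub>m (n-k) k) (0\<^sub>m (n-k) (n-k))"
  proof -
    have "1\<^sub>m (n-k) - 1\<^sub>m (n-k) = (0\<^sub>m (n-k) (n-k) :: complex mat)" by (intro eq_matI, auto)
    thus ?thesis by (intro cong_four_block_mat, simp_all)
  qed
  finally have e: "embed_mat n k v - embed_mat n k M = four_block_mat (v - M) (0\<^sub>m k (n-k)) (0\<^sub>m (n-k) k) (0\<^sub>m (n-k) (n-k))" .
  have vM: "v - M \<in> carrier_mat k k" using M by simp
  show ?thesis unfolding e
    apply (subst four_block_mat_mult_vec[OF vM zero_carrier_mat zero_carrier_mat zero_carrier_mat x1 x2])
    using x1 x2 vM by (simp add: zero_mat_vec')
qed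

lemma lin3s: "(a::complex) - b = c - d \<Longrightarrow> b - e = f - g \<Longrightarrow> h - f = i - j \<Longrightarrow> a - e = (c + h - i) - (d + g - j)"
  by (metis (no_types, lifting) add_diff_cancel_left add_diff_eq diff_add_cancel diff_diff_eq2)

lemma lin3:
  fixes a b c d e f g h i j :: "complex vec"
  assumes c: "a \<in> carrier_vec n" "b \<in> carrier_vec n" "c \<in> carrier_vec n" "d \<in> carrier_vec n"
    "e \<in> carrier_vec n" "f \<in> carrier_vec n" "g \<in> carrier_vec n" "h \<in> carrier_vec n"
    "i \<in> carrier_vec n" "j \<in> carrier_vec n"
    and h1: "a - b = c - d" and h2: "b - e = f - g" and h3: "h - f = i - j"
  shows "a - e = (c + h - i) - (d + g - j)"
proof (rule eq_vecI)
  fix l assume l: "l < dim_vec ((c + h - i) - (d + g - j))"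
  hence l: "l < n" using c by simp
  have "(a - b) $ l = (c - d) $ l" "(b - e) $ l = (f - g) $ l" "(h - f) $ l = (i - j) $ l"
    using h1 h2 h3 by simp_all
  hence "a $ l - e $ l = (c $ l + h $ l - i $ l) - (d $ l + g $ l - j $ l)" using c l by (intro lin3s, simp_all)
  thus "(a - e) $ l = ((c + h - i) - (d + g - j)) $ l" using c l by simp
qed (use c in simp)

lemma pi_cond_trans:
  fixes u v w :: "complex mat"
  assumes u: "u \<in> carrier_mat n n" and v: "v \<in> carrier_mat k k" and w: "w \<in> carrier_mat m m"
    and mk: "m \<le> k" and kn: "k \<le> n" and p1: "pi_cond n k u v" and p2: "pi_cond k m v w"
  shows "pi_cond n m u w"
  unfolding pi_cond_def
proof (intro ballI)
  fix x :: "complex vec" assume x: "x \<in> carrier_vec n"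
  define l where "l = n - k"
  have nkl: "n = k + l" unfolding l_def using kn by simp
  define x1 where "x1 = vec_first x k"
  define x2 where "x2 = vec_last x l"
  have x1: "x1 \<in> carrier_vec k" and x2: "x2 \<in> carrier_vec l" unfolding x1_def x2_def by auto
  have xs: "x = x1 @\<^sub>v x2" unfolding x1_def x2_def using x nkl by (metis vec_first_last_append)
  from p1[unfolded pi_cond_def, rule_format, OF x] obtain y where y: "y \<in> carrier_vec n"
    and y0: "\<forall>i<k. y $ i = 0" and ey: "(u - embed_mat n k v) *\<^sub>v x = (u - 1\<^sub>m n) *\<^sub>v y" by auto
  from p2[unfolded pi_cond_def, rule_format, OF x1] obtain z where z: "z \<in> carrier_vec k"
    and z0: "\<forall>i<m. z $ i = 0" and ez: "(v - embed_mat k m w) *\<^sub>v x1 = (v - 1\<^sub>m k) *\<^sub>v z" by auto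
  define zt where "zt = z @\<^sub>v 0\<^sub>v l"
  have zt: "zt \<in> carrier_vec n" unfolding zt_def nkl using z by auto
  from p1[unfolded pi_cond_def, rule_format, OF zt] obtain y' where y': "y' \<in> carrier_vec n"
    and y'0: "\<forall>i<k. y' $ i = 0" and ey': "(u - embed_mat n k v) *\<^sub>v zt = (u - 1\<^sub>m n) *\<^sub>v y'" by auto
  have Ev: "embed_mat n k v \<in> carrier_mat n n" by (rule embed_carrier[OF v kn])
  have Ew: "embed_mat n m w \<in> carrier_mat n n" using embed_carrier[OF w] mk kn by simp
  have Ekw: "embed_mat k m w \<in> carrier_mat k k" by (rule embed_carrier[OF w mk])
  have HK: "(embed_mat n k v - embed_mat n m w) *\<^sub>v x = (embed_mat n k v - 1\<^sub>m n) *\<^sub>v zt"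
  proof -
    have "(embed_mat n k v - embed_mat n m w) *\<^sub>v x = (embed_mat n k v - embed_mat n k (embed_mat k m w)) *\<^sub>v (x1 @\<^sub>v x2)"
      unfolding embed_comp[OF w mk kn] xs ..
    also have "\<dots> = ((v - embed_mat k m w) *\<^sub>v x1) @\<^sub>v 0\<^sub>v l"
      unfolding l_def by (rule embed_diff_vec[OF v Ekw kn x1 x2[unfolded l_def]])
    also have "\<dots> = ((v - 1\<^sub>m k) *\<^sub>v z) @\<^sub>v 0\<^sub>v l" unfolding ez ..
    also have "\<dots> = (embed_mat n k v - embed_mat n k (1\<^sub>m k)) *\<^sub>v zt"
      unfolding zt_def l_def by (rule embed_diff_vec[symmetric, OF v one_carrier_mat kn z], simp)
    also have "\<dots> = (embed_mat n k v - 1\<^sub>m n) *\<^sub>v zt" unfolding embed_one[OF kn] ..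
    finally show ?thesis .
  qed
  define Y where "Y = y + zt - y'"
  have Y: "Y \<in> carrier_vec n" unfolding Y_def using y zt y' by simp
  have Y0: "\<forall>i<m. Y $ i = 0"
  proof (intro allI impI)
    fix i assume i: "i < m"
    hence "i < k" "i < n" using mk kn by auto
    thus "Y $ i = 0" unfolding Y_def zt_def using y zt y' y0 y'0 z0 i z by simp
  qed
  have "(u - embed_mat n m w) *\<^sub>v x = (u *\<^sub>v y + u *\<^sub>v zt - u *\<^sub>v y') - (y + zt - y')"
  proof (rule lin3[of "u *\<^sub>v x" n "embed_mat n k v *\<^sub>v x" "u *\<^sub>v y" y "embed_mat n m w *\<^sub>v x"
        "embed_mat n k v *\<^sub>v zt" zt "u *\<^sub>v zt" "u *\<^sub>v y'" y', unfolded minus_mult_distrib_mat_vec[OF u Ew x, symmetric]])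
    show "u *\<^sub>v x - embed_mat n k v *\<^sub>v x = u *\<^sub>v y - y"
      using ey minus_mult_distrib_mat_vec[OF u Ev x] minus_mult_distrib_mat_vec[OF u one_carrier_mat y] y by simp
    show "embed_mat n k v *\<^sub>v x - embed_mat n m w *\<^sub>v x = embed_mat n k v *\<^sub>v zt - zt"
      using HK minus_mult_distrib_mat_vec[OF Ev Ew x] minus_mult_distrib_mat_vec[OF Ev one_carrier_mat zt] zt by simp
    show "u *\<^sub>v zt - embed_mat n k v *\<^sub>v zt = u *\<^sub>v y' - y'"
      using ey' minus_mult_distrib_mat_vec[OF u Ev zt] minus_mult_distrib_mat_vec[OF u one_carrier_mat y'] y' by simp
  qed (use u x y zt y' Ev Ew in auto)
  also have "\<dots> = (u - 1\<^sub>m n) *\<^sub>v Y"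
    unfolding Y_def minus_mult_distrib_mat_vec[OF u one_carrier_mat Y[unfolded Y_def]]
    using mult_minus_distrib_mat_vec[OF u _ y'] mult_add_distrib_mat_vec[OF u y zt] y zt y' u by simp
  finally show "\<exists>Y\<in>carrier_vec n. (\<forall>i<m. Y $ i = 0) \<and> (u - embed_mat n m w) *\<^sub>v x = (u - 1\<^sub>m n) *\<^sub>v Y"
    using Y Y0 by blast
qed

lemma pi_cond_self:
  assumes w: "w \<in> carrier_mat m m" shows "pi_cond m m w w"
  unfolding pi_cond_def embed_same[OF w]
proof (intro ballI bexI conjI)
  fix x :: "complex vec" assume x: "x \<in> carrier_vec m"
  show "(w - w) *\<^sub>v x = (w - 1\<^sub>m m) *\<^sub>v 0\<^sub>v m"
    unfolding minus_r_inv_mat[OF w] zero_mat_vec'[OF x] mat_vec_zero[OF minus_carrier_mat[OF one_carrier_mat[of m], of w]] ..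
next
  show "0\<^sub>v m \<in> carrier_vec m" by simp
next
  show "\<forall>k<m. 0\<^sub>v m $ k = (0 :: complex)" by simp
qed

lemma VU: "u \<in> V n \<Longrightarrow> u \<in> U n" unfolding V_def by simp
lemma Vc: "u \<in> V n \<Longrightarrow> u \<in> carrier_mat n n" unfolding V_def U_def by simp

theorem proposition2p4:
  fixes u :: "nat \<Rightarrow> complex mat"
  assumes "\<forall>n\<ge>1. u n \<in> V n"
  shows "virtual_rotation u \<longleftrightarrow> virtual_isometry u"
proof
  assume R: "virtual_rotation u"
  show "virtual_isometry u" unfolding virtual_isometry_def
  proof (intro conjI allI impI)
    fix n :: nat assume n: "n \<ge> 1"
    have Vn: "u n \<in> V n" using assms n by blast
    have V1: "u (Suc n) \<in> V (Suc n)" using assms by simp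
    show "u n \<in> U n" using VU[OF Vn] .
    have "u n = pi_tilde (Suc n) n (u (Suc n))" using R n unfolding virtual_rotation_def by simp
    thus "pi_proj (Suc n) n (u (Suc n)) = u n" using pi_proj_tilde[OF V1, of n] by simp
  qed
next
  assume I: "virtual_isometry u"
  have step: "pi_cond (Suc n) n (u (Suc n)) (u n)" if n: "n \<ge> 1" for n
  proof -
    have Vn: "u n \<in> V n" using assms n by blast
    have V1: "u (Suc n) \<in> V (Suc n)" using assms by simp
    have "pi_proj (Suc n) n (u (Suc n)) = u n" using I n unfolding virtual_isometry_def by simp
    hence "u n = pi_tilde (Suc n) n (u (Suc n))" using pi_proj_tilde[OF V1, of n] by simp
    thus ?thesis using pi_cond_iff[OF V1 _ Vc[OF Vn]] by simp
  qed
  have main: "\<forall>m. 1 \<le> m \<longrightarrow> m \<le> n \<longrightarrow> u m = pi_tilde n m (u n)" for n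
  proof (induction n)
    case 0 thus ?case by auto
  next
    case (Suc n)
    show ?case
    proof (intro allI impI)
      fix m assume m1: "1 \<le> m" and mn: "m \<le> Suc n"
      have VS: "u (Suc n) \<in> V (Suc n)" using assms by simp
      show "u m = pi_tilde (Suc n) m (u (Suc n))"
      proof (cases "m = Suc n")
        case True
        thus ?thesis using pi_cond_iff[OF VS order_refl Vc[OF VS]] pi_cond_self[OF Vc[OF VS]] by simp
      next
        case False
        hence mn': "m \<le> n" using mn by simp
        hence n1: "n \<ge> 1" using m1 by simp
        have Vn: "u n \<in> V n" and Vm: "u m \<in> V m" using assms n1 m1 by blast+
        have "u m = pi_tilde n m (u n)" using Suc.IH m1 mn' by blast
        hence "pi_cond n m (u n) (u m)" using pi_cond_iff[OF Vn mn' Vc[OF Vm]] by simp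
        hence "pi_cond (Suc n) m (u (Suc n)) (u m)"
          by (intro pi_cond_trans[OF Vc[OF VS] Vc[OF Vn] Vc[OF Vm] mn' _ step[OF n1]], simp)
        thus ?thesis using pi_cond_iff[OF VS mn Vc[OF Vm]] by simp
      qed
    qed
  qed
  show "virtual_rotation u" unfolding virtual_rotation_def using assms main by blast
qed

end
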